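(* Let $n\ge 1$. The maximum success probability of any strategy for the New Hats-on-a-line Game with two hat colours and $n$ players is $1-2^{-n}$.
   Context: The New Hats-on-a-line Game with $q$ colours and $n$ players: players $P_1,\dots,P_n$ stand in a line, and each player $P_i$ receives a hat whose colour $c_i$ is chosen uniformly at random from a fixed set of $q$ colours, independently of the other hats. Player $P_i$ sees exactly the hat colours $c_{i+1},\dots,c_n$. The players respond sequentially in the order $P_1,\dots,P_n$; each response is either a colour (a guess of one's own hat colour) or "pass", and each player hears all previous responses. No other communication is allowed, apart from agreeing on a strategy beforehand. A strategy specifies, for each player $P_i$, his response as a function of the colours he sees and the responses he has heard. The players win if at least one player guesses correctly and no player guesses incorrectly; the success probability of a strategy is the probability that the players win. Here $q=2$. *)

theory Defs
  imports Complex_Main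
begin

text \<open>Players P_1..P_n are indexed 0..n-1.
  A hat assignment is a list c of length n (c ! i is the colour of player i).
  A response is an option: None = pass, Some x = guess colour x.
  A strategy assigns to player i a function of the colours he sees
  (drop (i+1) c, i.e. the hats of all later players) and the list of
  responses heard so far (responses of players 0..i-1).\<close>

type_synonym colour = bool
type_synonym response = "colour option"
type_synonym strategy = "nat \<Rightarrow> colour list \<Rightarrow> response list \<Rightarrow> response"

fun responses :: "strategy \<Rightarrow> colour list \<Rightarrow> nat \<Rightarrow> response list" where
  "responses s c 0 = []"
| "responses s c (Suc i) =
     responses s c i @ [s i (drop (Suc i) c) (responses s c i)]"

definition wins :: "nat \<Rightarrow> strategy \<Rightarrow> colour list \<Rightarrow> bool" where
  "wins n s c \<longleftrightarrow>
     (let r = responses s c n in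
       (\<exists>i<n. r ! i = Some (c ! i)) \<and>
       (\<forall>i<n. r ! i \<noteq> None \<longrightarrow> r ! i = Some (c ! i)))"

text \<open>Hats are uniform and independent: every colour list of length n is equally likely.\<close>
definition success_prob :: "nat \<Rightarrow> strategy \<Rightarrow> real" where
  "success_prob n s =
     real (card {c :: colour list. length c = n \<and> wins n s c}) / 2 ^ n"

end

theory Submission
  imports Defs
begin

lemma len_resp[simp]: "length (responses s c i) = i"
  by (induction i) auto

lemma resp_cons:
  "responses s (x#t) (Suc i) =
     s 0 t [] # responses (\<lambda>j v r. s (Suc j) v (s 0 t [] # r)) t i"
  by (induction i) auto

lemma wins_cons:
  "wins (Suc m) s (x#t) \<longleftrightarrow>
    (let a = s 0 t []; R = responses (\<lambda>j v r. s (Suc j) v (a # r)) t m in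
     (a = Some x \<or> (\<exists>i<m. R!i = Some (t!i))) \<and> (a \<noteq> None \<longrightarrow> a = Some x) \<and>
     (\<forall>i<m. R!i \<noteq> None \<longrightarrow> R!i = Some (t!i)))"
  unfolding wins_def Let_def resp_cons All_less_Suc2 Ex_less_Suc2 nth_Cons_0 nth_Cons_Suc
  by auto

lemma lose_exists: "\<exists>c. length c = n \<and> \<not> wins n s c"
proof (induction n arbitrary: s)
  case 0
  show ?case by (auto simp: wins_def)
next
  case (Suc m)
  show ?case
  proof (cases "\<exists>t y. length t = m \<and> s 0 t [] = Some y")
    case True
    then obtain t y where "length t = m" "s 0 t [] = Some y" by blast
    then show ?thesis
      by (intro exI[of _ "(\<not>y)#t"]) (auto simp: wins_cons Let_def)
  next
    case False
    obtain t where t: "length t = m" "\<not> wins m (\<lambda>j v r. s (Suc j) v (None # r)) t"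
      using Suc by blast
    have a: "s 0 t [] = None" using False t(1) by auto
    have "wins (Suc m) s (False#t) = wins m (\<lambda>j v r. s (Suc j) v (None # r)) t"
      unfolding wins_cons Let_def a unfolding wins_def Let_def by simp
    then show ?thesis using t by (intro exI[of _ "False#t"]) simp
  qed
qed

definition strat :: strategy where
  "strat i v r = (if (\<forall>x\<in>set r. x = None) then (if (\<forall>b\<in>set v. \<not>b) then Some True else None) else None)"

lemma resp_none: "responses (\<lambda>_ _ _. None) t i = replicate i None"
  by (induction i) (auto simp: replicate_append_same)

lemma strat_wins: "length c = n \<Longrightarrow> wins n strat c \<longleftrightarrow> c \<noteq> replicate n False"
proof (induction n arbitrary: c)
  case 0
  then show ?case by (auto simp: wins_def)
next
  case (Suc m)
  then obtain x t where c: "c = x#t" and lt: "length t = m" by (cases c) auto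
  show ?case
  proof (cases "\<forall>b\<in>set t. \<not>b")
    case True
    have tr: "t = replicate m False" using True lt
      by (metis (full_types) replicate_length_same)
    have s': "(\<lambda>j v r. strat (Suc j) v (Some True # r)) = (\<lambda>_ _ _. None)"
      by (auto simp: strat_def fun_eq_iff)
    have a: "strat 0 t [] = Some True" using True by (simp add: strat_def)
    have "wins (Suc m) strat (x#t) \<longleftrightarrow> x"
      unfolding wins_cons Let_def a s' resp_none using lt by auto
    then show ?thesis unfolding c using tr by simp
  next
    case False
    have s': "(\<lambda>j v r. strat (Suc j) v (None # r)) = strat"
      by (auto simp: strat_def fun_eq_iff)
    have a: "strat 0 t [] = None" using False by (auto simp: strat_def)
    have "t \<noteq> replicate m False" using False by auto
    moreover have "wins (Suc m) strat (x#t) = wins m strat t"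
      unfolding wins_cons Let_def a s' unfolding wins_def Let_def by simp
    ultimately show ?thesis unfolding c using Suc.IH[OF lt] by simp
  qed
qed

lemma card_all: "card {c :: bool list. length c = n} = 2 ^ n"
proof -
  have "card {c :: bool list. set c \<subseteq> UNIV \<and> length c = n} = card (UNIV::bool set) ^ n"
    by (rule card_lists_length_eq) simp
  then show ?thesis by simp
qed

lemma fin_all: "finite {c :: bool list. length c = n}"
  using finite_lists_length_eq[of "UNIV::bool set" n] by simp

theorem theorem2:
  fixes n :: nat
  assumes "n \<ge> 1"
  shows "(\<forall>s. success_prob n s \<le> 1 - 1 / 2 ^ n) \<and>
         (\<exists>s. success_prob n s = 1 - 1 / 2 ^ n)"
proof
  show "\<forall>s. success_prob n s \<le> 1 - 1 / 2 ^ n"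
  proof
    fix s
    obtain c where c: "length c = n" "\<not> wins n s c" using lose_exists by blast
    have "{c. length c = n \<and> wins n s c} \<subseteq> {c. length c = n} - {c}" using c by auto
    hence "card {c. length c = n \<and> wins n s c} \<le> card ({c :: bool list. length c = n} - {c})"
      by (intro card_mono) (auto simp: fin_all)
    also have "\<dots> = 2 ^ n - 1" using c fin_all card_all by (simp add: card_Diff_singleton)
    finally have k: "card {c. length c = n \<and> wins n s c} \<le> 2 ^ n - 1" .
    have one: "(1::nat) \<le> 2 ^ n" by simp
    have "real (card {c. length c = n \<and> wins n s c}) \<le> real ((2::nat) ^ n - 1)"
      using k by (simp only: of_nat_le_iff)
    also have "\<dots> = 2 ^ n - 1" using one by (simp add: of_nat_diff)
    finally have "real (card {c. length c = n \<and> wins n s c}) \<le> 2 ^ n - 1" .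
    thus "success_prob n s \<le> 1 - 1 / 2 ^ n"
      unfolding success_prob_def by (simp add: field_simps)
  qed
next
  have "{c. length c = n \<and> wins n strat c} = {c :: bool list. length c = n} - {replicate n False}"
    using strat_wins by auto
  hence "card {c. length c = n \<and> wins n strat c} = 2 ^ n - 1"
    using fin_all card_all by (simp add: card_Diff_singleton)
  hence "real (card {c. length c = n \<and> wins n strat c}) = 2 ^ n - 1"
    by (simp add: of_nat_diff)
  hence "success_prob n strat = 1 - 1 / 2 ^ n"
    unfolding success_prob_def by (simp add: field_simps)
  thus "\<exists>s. success_prob n s = 1 - 1 / 2 ^ n" by blast
qed

end
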